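(* Consider the Bayesian setting described in the context. For any deterministic auction that satisfies (VP), (NPT), and (IC) ex-post (where bidders may misreport their valuation arbitrarily and their budget only downward), together with the budget constraints $P_i(\vec v,\vec b)\le b_i$ and the size constraints $x_i(\vec v,\vec b)\le\kappa_i$, the interim quantities $x_{ikm}$ and $P_{ikm}$ of the auction form a feasible solution of the linear program below. In particular, the optimal LP value is an upper bound on the expected revenue of the revenue-maximizing such auction. LP: maximize $\sum_{i,k,m}f_{ikm}P_{ikm}$ subject to $\sum_{i,k,m}f_{ikm}x_{ikm}\le1$; $s_kx_{ikm}-P_{ikm}\ge s_kx_{ilt}-P_{ilt}$ for all $i,k,l$ and all $t<m$; $s_kx_{ikm}-P_{ikm}\ge0$ for all $i,k,m$; $P_{ikm}\in[0,\beta_m]$ and $x_{ikm}\in[0,\kappa_i]$ for all $i,k,m$.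
   Context: There are $n$ bidders and one unit of an infinitely divisible good. Bidder $i$ has a private valuation per unit taking values in $0=s_0\le s_1<s_2<\dots<s_K$, a private budget taking values in $0=\beta_0\le\beta_1<\dots<\beta_M$, and a public size constraint $\kappa_i$ (the maximum amount it wants). The auctioneer knows independent (across bidders) distributions $f_{ikm}=\Pr[v_i=s_k\text{ and }b_i=\beta_m]$. A deterministic auction maps reported $(\vec v,\vec b)$ to allocations $x_i(\vec v,\vec b)$ and prices $P_i(\vec v,\vec b)$, with $\sum_ix_i\le1$. A bidder's utility is $-\infty$ if the price exceeds the true budget and (true valuation)$\times$(allocation) minus price otherwise. (VP): truthful reporting gives nonnegative utility; (NPT): prices are nonnegative; (IC): truthful reporting maximizes utility, for every report of the other bidders. The interim quantities are $x_{ikm}=\mathbb E_{\vec v_{-i},\vec b_{-i}}[x_i(s_k,\beta_m,\vec v_{-i},\vec b_{-i})]$ and $P_{ikm}=\mathbb E_{\vec v_{-i},\vec b_{-i}}[P_i(s_k,\beta_m,\vec v_{-i},\vec b_{-i})]$, where the other bidders' reports are drawn from their distributions. Expected revenue is $\mathbb E[\sum_iP_i(\vec v,\vec b)]$ with $(\vec v,\vec b)$ drawn from the distributions. *)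

theory Defs
  imports Complex_Main "HOL-Library.Extended_Real" "HOL-Library.FuncSet"
begin

text \<open>Bidders are 0..<n. A type of bidder i is a pair (k,m) of indices, meaning valuation s k
  (k \<le> K) and budget beta m (m \<le> M). A report profile assigns a type to each bidder.\<close>

type_synonym profile = "nat \<Rightarrow> nat \<times> nat"

definition types :: "nat \<Rightarrow> nat \<Rightarrow> (nat \<times> nat) set" where
  "types K M = {..K} \<times> {..M}"

definition profiles :: "nat \<Rightarrow> nat \<Rightarrow> nat \<Rightarrow> profile set" where
  "profiles n K M = PiE {..<n} (\<lambda>_. types K M)"

definition others :: "nat \<Rightarrow> nat \<Rightarrow> nat \<Rightarrow> nat \<Rightarrow> profile set" where
  "others n K M i = PiE ({..<n} - {i}) (\<lambda>_. types K M)"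

definition prof_prob :: "(nat \<Rightarrow> nat \<Rightarrow> nat \<Rightarrow> real) \<Rightarrow> nat set \<Rightarrow> profile \<Rightarrow> real" where
  "prof_prob f I q = (\<Prod>j\<in>I. f j (fst (q j)) (snd (q j)))"

definition utility :: "(nat \<Rightarrow> real) \<Rightarrow> (nat \<Rightarrow> real) \<Rightarrow> nat \<Rightarrow> nat \<Rightarrow> real \<Rightarrow> real \<Rightarrow> ereal" where
  "utility s beta k m a p = (if p > beta m then -\<infinity> else ereal (s k * a - p))"

definition interim :: "nat \<Rightarrow> nat \<Rightarrow> nat \<Rightarrow> (nat \<Rightarrow> nat \<Rightarrow> nat \<Rightarrow> real)
    \<Rightarrow> (nat \<Rightarrow> profile \<Rightarrow> real) \<Rightarrow> nat \<Rightarrow> nat \<Rightarrow> nat \<Rightarrow> real" where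
  "interim n K M f g i k m =
     (\<Sum>q\<in>others n K M i. prof_prob f ({..<n} - {i}) q * g i (q(i := (k, m))))"

definition expected_revenue :: "nat \<Rightarrow> nat \<Rightarrow> nat \<Rightarrow> (nat \<Rightarrow> nat \<Rightarrow> nat \<Rightarrow> real)
    \<Rightarrow> (nat \<Rightarrow> profile \<Rightarrow> real) \<Rightarrow> real" where
  "expected_revenue n K M f P =
     (\<Sum>p\<in>profiles n K M. prof_prob f {..<n} p * (\<Sum>i<n. P i p))"

definition lp_objective :: "nat \<Rightarrow> nat \<Rightarrow> nat \<Rightarrow> (nat \<Rightarrow> nat \<Rightarrow> nat \<Rightarrow> real)
    \<Rightarrow> (nat \<Rightarrow> nat \<Rightarrow> nat \<Rightarrow> real) \<Rightarrow> real" where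
  "lp_objective n K M f Q = (\<Sum>i<n. \<Sum>k\<le>K. \<Sum>m\<le>M. f i k m * Q i k m)"

definition lp_feasible :: "nat \<Rightarrow> nat \<Rightarrow> nat \<Rightarrow> (nat \<Rightarrow> real) \<Rightarrow> (nat \<Rightarrow> real) \<Rightarrow> (nat \<Rightarrow> real)
    \<Rightarrow> (nat \<Rightarrow> nat \<Rightarrow> nat \<Rightarrow> real) \<Rightarrow> (nat \<Rightarrow> nat \<Rightarrow> nat \<Rightarrow> real)
    \<Rightarrow> (nat \<Rightarrow> nat \<Rightarrow> nat \<Rightarrow> real) \<Rightarrow> bool" where
  "lp_feasible n K M s beta kappa f X Q \<longleftrightarrow>
     (\<Sum>i<n. \<Sum>k\<le>K. \<Sum>m\<le>M. f i k m * X i k m) \<le> 1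
   \<and> (\<forall>i<n. \<forall>k\<le>K. \<forall>l\<le>K. \<forall>m\<le>M. \<forall>t<m.
        s k * X i k m - Q i k m \<ge> s k * X i l t - Q i l t)
   \<and> (\<forall>i<n. \<forall>k\<le>K. \<forall>m\<le>M. s k * X i k m - Q i k m \<ge> 0)
   \<and> (\<forall>i<n. \<forall>k\<le>K. \<forall>m\<le>M. 0 \<le> Q i k m \<and> Q i k m \<le> beta m)
   \<and> (\<forall>i<n. \<forall>k\<le>K. \<forall>m\<le>M. 0 \<le> X i k m \<and> X i k m \<le> kappa i)"

definition lp_value :: "nat \<Rightarrow> nat \<Rightarrow> nat \<Rightarrow> (nat \<Rightarrow> real) \<Rightarrow> (nat \<Rightarrow> real) \<Rightarrow> (nat \<Rightarrow> real)
    \<Rightarrow> (nat \<Rightarrow> nat \<Rightarrow> nat \<Rightarrow> real) \<Rightarrow> real" where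
  "lp_value n K M s beta kappa f =
     Sup {lp_objective n K M f Q | X Q. lp_feasible n K M s beta kappa f X Q}"

end

theory Submission imports Defs begin
lemma ins_eq: "i < n \<Longrightarrow> {..<n} = insert i ({..<n} - {i})" by auto

lemma upd_in_profiles:
  assumes "i < n" "q \<in> others n K M i" "k \<le> K" "m \<le> M"
  shows "q(i := (k, m)) \<in> profiles n K M"
proof -
  have "q(i := (k, m)) \<in> PiE (insert i ({..<n} - {i})) (\<lambda>_. types K M)"
    using assms by (intro PiE_fun_upd) (auto simp: types_def others_def)
  then show ?thesis using ins_eq[OF assms(1)] by (simp add: profiles_def)
qed

lemma prob_nonneg:
  assumes "\<And>i k m. i < n \<Longrightarrow> k \<le> K \<Longrightarrow> m \<le> M \<Longrightarrow> f i k m \<ge> 0"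
    and "I \<subseteq> {..<n}" and "q \<in> PiE I (\<lambda>_. types K M)"
  shows "prof_prob f I q \<ge> 0"
  unfolding prof_prob_def using assms
  by (intro prod_nonneg) (force simp: types_def PiE_def Pi_def)

lemma prob_sum1:
  assumes "\<And>i. i < n \<Longrightarrow> (\<Sum>k\<le>K. \<Sum>m\<le>M. f i k m) = 1"
    and "I \<subseteq> {..<n}" "finite I"
  shows "(\<Sum>q\<in>PiE I (\<lambda>_. types K M). prof_prob f I q) = 1"
proof -
  have "(\<Sum>q\<in>PiE I (\<lambda>_. types K M). prof_prob f I q)
      = (\<Prod>j\<in>I. \<Sum>y\<in>types K M. f j (fst y) (snd y))"
    unfolding prof_prob_def
    by (subst prod_sum_PiE) (auto simp: assms types_def)
  also have "\<dots> = (\<Prod>j\<in>I. 1)"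
  proof (rule prod.cong[OF refl])
    fix j assume "j \<in> I"
    then have "j < n" using assms by auto
    have "(\<Sum>y\<in>types K M. f j (fst y) (snd y)) = (\<Sum>k\<le>K. \<Sum>m\<le>M. f j k m)"
      unfolding types_def by (simp add: sum.cartesian_product split_def)
    then show "(\<Sum>y\<in>types K M. f j (fst y) (snd y)) = 1" using assms(1)[OF \<open>j<n\<close>] by simp
  qed
  finally show ?thesis by simp
qed

lemma decomp:
  assumes "i < n"
  shows "(\<Sum>p\<in>profiles n K M. prof_prob f {..<n} p * g p)
     = (\<Sum>k\<le>K. \<Sum>m\<le>M. f i k m * (\<Sum>q\<in>others n K M i. prof_prob f ({..<n} - {i}) q * g (q(i := (k, m)))))"
proof -
  let ?A = "{..<n} - {i}"
  let ?T = "\<lambda>_::nat. types K M"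
  have "(\<Sum>p\<in>profiles n K M. prof_prob f {..<n} p * g p)
      = (\<Sum>p\<in>PiE (insert i ?A) ?T. prof_prob f (insert i ?A) p * g p)"
    using ins_eq[OF assms] by (simp add: profiles_def)
  also have "\<dots> = (\<Sum>(y,q)\<in>types K M \<times> PiE ?A ?T. prof_prob f (insert i ?A) (q(i:=y)) * g (q(i:=y)))"
    by (intro sum.reindex_bij_witness[of _ "\<lambda>(y,g). g(i := y)" "\<lambda>g. (g i, g(i := undefined))"])
       (auto simp: PiE_def extensional_def)
  also have "\<dots> = (\<Sum>(y,q)\<in>types K M \<times> PiE ?A ?T. f i (fst y) (snd y) * (prof_prob f ?A q * g (q(i:=y))))"
  proof (rule sum.cong[OF refl], clarify)
    fix a b q assume "(a,b) \<in> types K M" "q \<in> PiE ?A ?T"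
    have "prof_prob f (insert i ?A) (q(i:=(a,b))) = f i a b * prof_prob f ?A q"
      unfolding prof_prob_def
      by (subst prod.insert) (auto intro!: prod.cong)
    then show "prof_prob f (insert i ?A) (q(i:=(a,b))) * g (q(i:=(a,b))) =
        f i (fst (a,b)) (snd (a,b)) * (prof_prob f ?A q * g (q(i:=(a,b))))" by simp
  qed
  also have "\<dots> = (\<Sum>y\<in>types K M. f i (fst y) (snd y) * (\<Sum>q\<in>PiE ?A ?T. prof_prob f ?A q * g (q(i:=y))))"
    by (subst sum.cartesian_product[symmetric]) (simp add: sum_distrib_left)
  also have "\<dots> = (\<Sum>k\<le>K. \<Sum>m\<le>M. f i k m * (\<Sum>q\<in>others n K M i. prof_prob f ?A q * g (q(i := (k, m)))))"
    unfolding types_def others_def by (simp add: sum.cartesian_product split_def)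
  finally show ?thesis .
qed

lemma beta_mono:
  fixes beta :: "nat \<Rightarrow> real" and t m M :: nat
  assumes b0: "beta 0 = (0::real)" and b01: "beta 0 \<le> beta 1" and b_mono: "strict_mono_on {1..M} beta"
    and "t \<le> m" "m \<le> M"
  shows "beta t \<le> beta m"
proof (cases "t = m")
  case True then show ?thesis by simp
next
  case False
  show ?thesis
  proof (cases "t = 0")
    case True
    with False have "1 \<le> m" by simp
    then have "beta 1 \<le> beta m" using b_mono assms(5)
      by (cases "m = 1") (auto intro!: less_imp_le strict_mono_onD[OF b_mono])
    then show ?thesis using True b01 by simp
  next
    case f2: False
    then show ?thesis using False assms
      by (auto intro!: less_imp_le strict_mono_onD[OF b_mono])
  qed
qed

theorem lemma7:
  fixes n K M :: nat
    and s beta kappa :: "nat \<Rightarrow> real"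
    and f :: "nat \<Rightarrow> nat \<Rightarrow> nat \<Rightarrow> real"
    and x P :: "nat \<Rightarrow> profile \<Rightarrow> real"
  assumes s0: "s 0 = 0" and s01: "s 0 \<le> s 1" and s_mono: "strict_mono_on {1..K} s"
    and b0: "beta 0 = 0" and b01: "beta 0 \<le> beta 1" and b_mono: "strict_mono_on {1..M} beta"
    and f_nonneg: "\<And>i k m. i < n \<Longrightarrow> k \<le> K \<Longrightarrow> m \<le> M \<Longrightarrow> f i k m \<ge> 0"
    and f_sum: "\<And>i. i < n \<Longrightarrow> (\<Sum>k\<le>K. \<Sum>m\<le>M. f i k m) = 1"
    and x_nonneg: "\<And>i p. i < n \<Longrightarrow> p \<in> profiles n K M \<Longrightarrow> x i p \<ge> 0"
    and x_total: "\<And>p. p \<in> profiles n K M \<Longrightarrow> (\<Sum>i<n. x i p) \<le> 1"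
    and size: "\<And>i p. i < n \<Longrightarrow> p \<in> profiles n K M \<Longrightarrow> x i p \<le> kappa i"
    and budget: "\<And>i p. i < n \<Longrightarrow> p \<in> profiles n K M \<Longrightarrow> P i p \<le> beta (snd (p i))"
    and NPT: "\<And>i p. i < n \<Longrightarrow> p \<in> profiles n K M \<Longrightarrow> P i p \<ge> 0"
    and VP: "\<And>i p. i < n \<Longrightarrow> p \<in> profiles n K M \<Longrightarrow>
               utility s beta (fst (p i)) (snd (p i)) (x i p) (P i p) \<ge> 0"
    and IC: "\<And>i p l t. i < n \<Longrightarrow> p \<in> profiles n K M \<Longrightarrow> l \<le> K \<Longrightarrow> t \<le> snd (p i) \<Longrightarrow>
               utility s beta (fst (p i)) (snd (p i)) (x i p) (P i p)
                 \<ge> utility s beta (fst (p i)) (snd (p i)) (x i (p(i := (l, t)))) (P i (p(i := (l, t))))"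
  shows "lp_feasible n K M s beta kappa f (interim n K M f x) (interim n K M f P)
       \<and> expected_revenue n K M f P = lp_objective n K M f (interim n K M f P)
       \<and> expected_revenue n K M f P \<le> lp_value n K M s beta kappa f"
proof -
  let ?A = "\<lambda>i. {..<n} - {i}"
  let ?w = "\<lambda>i q. prof_prob f (?A i) q"
  have wnn: "?w i q \<ge> 0" if "i < n" "q \<in> others n K M i" for i q
    using that by (intro prob_nonneg[where n=n and K=K and M=M]) (auto simp: others_def f_nonneg)
  have w1: "(\<Sum>q\<in>others n K M i. ?w i q) = 1" if "i < n" for i
    unfolding others_def by (rule prob_sum1[where n=n]) (auto simp: f_sum)
  have comb: "(\<Sum>q\<in>others n K M i. ?w i q * a q) \<le> (\<Sum>q\<in>others n K M i. ?w i q * b q)"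
    if "i < n" "\<And>q. q \<in> others n K M i \<Longrightarrow> a q \<le> b q" for i a b
    using that wnn by (intro sum_mono mult_left_mono) auto
  have const: "(\<Sum>q\<in>others n K M i. ?w i q * c) = c" if "i < n" for i c
    using w1[OF that] by (simp add: sum_distrib_right[symmetric])
  have lin: "c * interim n K M f x i k m - interim n K M f P i k m
     = (\<Sum>q\<in>others n K M i. ?w i q * (c * x i (q(i := (k, m))) - P i (q(i := (k, m)))))" for c i k m
    unfolding interim_def
    by (simp add: sum_distrib_left right_diff_distrib sum_subtractf mult.left_commute)
  have bm: "beta t \<le> beta m" if "t \<le> m" "m \<le> M" for t m
    using beta_mono[OF b0 b01 b_mono that] .
  have ICi: "s k * interim n K M f x i k m - interim n K M f P i k m
        \<ge> s k * interim n K M f x i l t - interim n K M f P i l t"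
    if "i < n" "k \<le> K" "l \<le> K" "m \<le> M" "t < m" for i k l m t
  proof -
    have "(\<Sum>q\<in>others n K M i. ?w i q * (s k * x i (q(i := (l, t))) - P i (q(i := (l, t)))))
        \<le> (\<Sum>q\<in>others n K M i. ?w i q * (s k * x i (q(i := (k, m))) - P i (q(i := (k, m)))))"
    proof (rule comb[OF that(1)])
      fix q assume q: "q \<in> others n K M i"
      let ?p = "q(i := (k, m))"
      have p: "?p \<in> profiles n K M" using upd_in_profiles[OF that(1) q that(2,4)] .
      have p': "q(i := (l, t)) \<in> profiles n K M"
        using upd_in_profiles[OF that(1) q that(3)] that by simp
      have IC': "utility s beta k m (x i ?p) (P i ?p) \<ge> utility s beta k m (x i (q(i := (l, t)))) (P i (q(i := (l, t))))"
        using IC[OF that(1) p that(3), of t] that by simp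
      have "P i ?p \<le> beta m" using budget[OF that(1) p] by simp
      moreover have "P i (q(i := (l, t))) \<le> beta m"
        using budget[OF that(1) p'] bm[of t m] that by simp
      ultimately show "s k * x i (q(i := (l, t))) - P i (q(i := (l, t))) \<le> s k * x i ?p - P i ?p"
        using IC' by (simp add: utility_def not_less)
    qed
    then show ?thesis using lin[of "s k" i k m] lin[of "s k" i l t] by simp
  qed
  have VPi: "s k * interim n K M f x i k m - interim n K M f P i k m \<ge> 0"
    if "i < n" "k \<le> K" "m \<le> M" for i k m
  proof -
    have "(\<Sum>q\<in>others n K M i. ?w i q * 0)
        \<le> (\<Sum>q\<in>others n K M i. ?w i q * (s k * x i (q(i := (k, m))) - P i (q(i := (k, m)))))"
    proof (rule comb[OF that(1)])
      fix q assume q: "q \<in> others n K M i"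
      let ?p = "q(i := (k, m))"
      have p: "?p \<in> profiles n K M" using upd_in_profiles[OF that(1) q that(2,3)] .
      have "P i ?p \<le> beta m" using budget[OF that(1) p] by simp
      then show "0 \<le> s k * x i ?p - P i ?p"
        using VP[OF that(1) p] by (simp add: utility_def not_less)
    qed
    then show ?thesis using lin[of "s k" i k m] by simp
  qed
  have bnd: "c1 \<le> interim n K M f g i k m \<and> interim n K M f g i k m \<le> c2"
    if "i < n" "k \<le> K" "m \<le> M"
       "\<And>q. q \<in> others n K M i \<Longrightarrow> c1 \<le> g i (q(i := (k, m))) \<and> g i (q(i := (k, m))) \<le> c2" for i k m g c1 c2
  proof -
    have "(\<Sum>q\<in>others n K M i. ?w i q * c1) \<le> interim n K M f g i k m"
      unfolding interim_def using that(4) by (intro comb[OF that(1)]) auto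
    moreover have "interim n K M f g i k m \<le> (\<Sum>q\<in>others n K M i. ?w i q * c2)"
      unfolding interim_def using that(4) by (intro comb[OF that(1)]) auto
    ultimately show ?thesis using const[OF that(1)] by simp
  qed
  have Pb: "0 \<le> interim n K M f P i k m \<and> interim n K M f P i k m \<le> beta m"
    if "i < n" "k \<le> K" "m \<le> M" for i k m
  proof (rule bnd[OF that])
    fix q assume q: "q \<in> others n K M i"
    have p: "q(i := (k, m)) \<in> profiles n K M" using upd_in_profiles[OF that(1) q that(2,3)] .
    show "0 \<le> P i (q(i := (k, m))) \<and> P i (q(i := (k, m))) \<le> beta m"
      using NPT[OF that(1) p] budget[OF that(1) p] by simp
  qed
  have Xb: "0 \<le> interim n K M f x i k m \<and> interim n K M f x i k m \<le> kappa i"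
    if "i < n" "k \<le> K" "m \<le> M" for i k m
  proof (rule bnd[OF that])
    fix q assume q: "q \<in> others n K M i"
    have p: "q(i := (k, m)) \<in> profiles n K M" using upd_in_profiles[OF that(1) q that(2,3)] .
    show "0 \<le> x i (q(i := (k, m))) \<and> x i (q(i := (k, m))) \<le> kappa i"
      using x_nonneg[OF that(1) p] size[OF that(1) p] by simp
  qed
  let ?pr = "prof_prob f {..<n}"
  have pnn: "?pr p \<ge> 0" if "p \<in> profiles n K M" for p
    using that by (intro prob_nonneg[where n=n and K=K and M=M]) (auto simp: profiles_def f_nonneg)
  have p1: "(\<Sum>p\<in>profiles n K M. ?pr p) = 1"
    unfolding profiles_def by (rule prob_sum1[where n=n]) (auto simp: f_sum)
  have exp_i: "(\<Sum>p\<in>profiles n K M. ?pr p * g i p)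
       = (\<Sum>k\<le>K. \<Sum>m\<le>M. f i k m * interim n K M f g i k m)" if "i < n" for g i
    unfolding interim_def using decomp[OF that] .
  have alloc: "(\<Sum>i<n. \<Sum>k\<le>K. \<Sum>m\<le>M. f i k m * interim n K M f x i k m) \<le> 1"
  proof -
    have "(\<Sum>i<n. \<Sum>k\<le>K. \<Sum>m\<le>M. f i k m * interim n K M f x i k m)
        = (\<Sum>i<n. \<Sum>p\<in>profiles n K M. ?pr p * x i p)"
      using exp_i by (intro sum.cong) auto
    also have "\<dots> = (\<Sum>p\<in>profiles n K M. ?pr p * (\<Sum>i<n. x i p))"
      by (subst sum.swap) (simp add: sum_distrib_left)
    also have "\<dots> \<le> (\<Sum>p\<in>profiles n K M. ?pr p * 1)"
      using pnn x_total by (intro sum_mono mult_left_mono) auto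
    finally show ?thesis using p1 by simp
  qed
  have feas: "lp_feasible n K M s beta kappa f (interim n K M f x) (interim n K M f P)"
    unfolding lp_feasible_def using alloc ICi VPi Pb Xb by simp
  have rev: "expected_revenue n K M f P = lp_objective n K M f (interim n K M f P)"
  proof -
    have "expected_revenue n K M f P = (\<Sum>i<n. \<Sum>p\<in>profiles n K M. ?pr p * P i p)"
      unfolding expected_revenue_def by (subst sum.swap) (simp add: sum_distrib_left)
    also have "\<dots> = lp_objective n K M f (interim n K M f P)"
      unfolding lp_objective_def using exp_i by (intro sum.cong) auto
    finally show ?thesis .
  qed
  have bdd: "bdd_above {lp_objective n K M f Q | X Q. lp_feasible n K M s beta kappa f X Q}"
  proof (rule bdd_aboveI, clarify)
    fix X Q assume fe: "lp_feasible n K M s beta kappa f X Q"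
    show "lp_objective n K M f Q \<le> (\<Sum>i<n. \<Sum>k\<le>K. \<Sum>m\<le>M. f i k m * beta m)"
      unfolding lp_objective_def using fe f_nonneg
      by (intro sum_mono mult_left_mono) (auto simp: lp_feasible_def)
  qed
  have "expected_revenue n K M f P \<le> lp_value n K M s beta kappa f"
    unfolding lp_value_def rev using feas by (intro cSup_upper[OF _ bdd]) blast
  then show ?thesis using feas rev by simp
qed

end
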